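(* Let $s,k$ be integers with $1\leq k<s$. The Laplacian spectrum of the spider $T(s,k)$ is $$\{0^{[1]},\ \theta^{[k-1]},\ \lambda_1^{[1]},\ 1^{[s-k-1]},\ \lambda_2^{[1]},\ \overline{\theta}^{[k-1]},\ \lambda_3^{[1]}\},$$ where $\theta=\frac{3-\sqrt{5}}{2}$, $\overline{\theta}=\frac{3+\sqrt{5}}{2}$, and $\lambda_1,\lambda_2,\lambda_3$ are the roots of $x^3-(s+4)x^2+(3s+4)x-(s+k+1)$.
   Context: For a graph $G$, the Laplacian matrix is $L(G)=D(G)-A(G)$, with $D(G)$ the diagonal degree matrix and $A(G)$ the adjacency matrix; its Laplacian spectrum is the multiset of eigenvalues of $L(G)$, and $a^{[m]}$ denotes the eigenvalue $a$ with multiplicity $m$ (listed values may coincide, in which case multiplicities add). For integers $1\leq k\leq s$, the spider $T(s,k)$ is the tree obtained from the star $K_{1,s}$ by extending $k$ of its $s$ rays by one extra edge each; it has $s+k+1$ vertices. *)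

theory Defs
  imports "Jordan_Normal_Form.Char_Poly" "HOL-Computational_Algebra.Polynomial"
begin

text \<open>A finite simple graph on the vertex set {0..<n} is given by a symmetric,
irreflexive adjacency relation E.  Its Laplacian matrix is L = D - A.\<close>

definition adjacency_matrix :: "nat \<Rightarrow> (nat \<Rightarrow> nat \<Rightarrow> bool) \<Rightarrow> real mat" where
  "adjacency_matrix n E = mat n n (\<lambda>(i,j). if E i j then 1 else 0)"

definition degree :: "nat \<Rightarrow> (nat \<Rightarrow> nat \<Rightarrow> bool) \<Rightarrow> nat \<Rightarrow> nat" where
  "degree n E i = card {j. j < n \<and> E i j}"

definition degree_matrix :: "nat \<Rightarrow> (nat \<Rightarrow> nat \<Rightarrow> bool) \<Rightarrow> real mat" where
  "degree_matrix n E = mat n n (\<lambda>(i,j). if i = j then real (degree n E i) else 0)"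

definition laplacian_matrix :: "nat \<Rightarrow> (nat \<Rightarrow> nat \<Rightarrow> bool) \<Rightarrow> real mat" where
  "laplacian_matrix n E = degree_matrix n E - adjacency_matrix n E"

definition laplacian_spectrum :: "nat \<Rightarrow> (nat \<Rightarrow> nat \<Rightarrow> bool) \<Rightarrow> complex multiset" where
  "laplacian_spectrum n E = proots (char_poly (map_mat complex_of_real (laplacian_matrix n E)))"

text \<open>The spider T(s,k) on vertices {0..<s+k+1}: vertex 0 is the centre, vertices
1..s are the neighbours of the centre, and for 1 \<le> i \<le> k the vertex s+i is a
pendant vertex attached to vertex i (extending the ray through i).\<close>

definition spider_edge :: "nat \<Rightarrow> nat \<Rightarrow> nat \<Rightarrow> nat \<Rightarrow> bool" where
  "spider_edge s k u v \<longleftrightarrow>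
     (u = 0 \<and> 1 \<le> v \<and> v \<le> s) \<or> (v = 0 \<and> 1 \<le> u \<and> u \<le> s) \<or>
     (1 \<le> u \<and> u \<le> k \<and> v = s + u) \<or> (1 \<le> v \<and> v \<le> k \<and> u = s + v)"

definition spider_laplacian_spectrum :: "nat \<Rightarrow> nat \<Rightarrow> complex multiset" where
  "spider_laplacian_spectrum s k = laplacian_spectrum (s + k + 1) (spider_edge s k)"

end

theory Submission
  imports Defs
begin

definition dg :: "nat \<Rightarrow> nat \<Rightarrow> nat \<Rightarrow> nat" where
  "dg s k i = (if i = 0 then s else if i \<le> k then 2 else 1)"

lemma spider_degree:
  assumes "1 \<le> k" "k < s" "i < s + k + 1"
  shows "degree (s + k + 1) (spider_edge s k) i = dg s k i"
proof -
  consider "i = 0" | "1 \<le> i \<and> i \<le> k" | "k < i \<and> i \<le> s" | "s < i" by linarith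
  then show ?thesis
  proof cases
    case 1
    then have "{j. j < s + k + 1 \<and> spider_edge s k i j} = {1..s}"
      using assms by (auto simp: spider_edge_def)
    then show ?thesis using 1 by (simp add: degree_def dg_def)
  next
    case 2
    then have "{j. j < s + k + 1 \<and> spider_edge s k i j} = {0, s+i}"
      using assms by (auto simp: spider_edge_def)
    then show ?thesis using 2 assms by (simp add: degree_def dg_def)
  next
    case 3
    then have "{j. j < s + k + 1 \<and> spider_edge s k i j} = {0}"
      using assms by (auto simp: spider_edge_def)
    then show ?thesis using 3 assms by (simp add: degree_def dg_def)
  next
    case 4
    then have "{j. j < s + k + 1 \<and> spider_edge s k i j} = {i - s}"
      using assms by (auto simp: spider_edge_def)
    then show ?thesis using 4 assms by (simp add: degree_def dg_def)
  qed
qed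

lemma lap_entry:
  assumes "1 \<le> k" "k < s" "i < s + k + 1" "j < s + k + 1"
  shows "laplacian_matrix (s + k + 1) (spider_edge s k) $$ (i,j) =
    (if i = j then real (dg s k i) else if spider_edge s k i j then -1 else 0)"
  using assms spider_degree[OF assms(1,2,3)]
  by (auto simp: laplacian_matrix_def degree_matrix_def adjacency_matrix_def spider_edge_def)


lemma gen1:
  fixes x K A Q R :: complex
  assumes "A \<noteq> 0" "Q \<noteq> 0"
  shows "(x - K*A/Q - R/A)*(Q*A) = x*Q*A - K*A*A - R*Q"
  using assms by (simp add: algebra_simps)
lemma alg1:
  fixes a S K :: complex
  assumes am: "a - 1 \<noteq> 0" and q0: "a^2 - 3*a + 1 \<noteq> 0"
  shows "(a - S - K * (a-1)/(a^2 - 3*a + 1) - (S - K) / (a - 1)) * ((a^2 - 3*a + 1) * (a-1))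
     = a * (a^3 - (S+4) * a^2 + (3*S+4) * a - (S+K+1))"
proof -
  have "(a - S - K * (a-1)/(a^2 - 3*a + 1) - (S - K) / (a - 1)) * ((a^2 - 3*a + 1) * (a-1))
    = (a - S) * (a^2 - 3*a + 1) * (a-1) - K * (a-1) * (a-1) - (S - K) * (a^2 - 3*a + 1)"
    by (rule gen1[OF am q0])
  also have "\<dots> = a * (a^3 - (S+4) * a^2 + (3*S+4) * a - (S+K+1))"
    by (simp add: algebra_simps power2_eq_square power3_eq_cube)
  finally show ?thesis .
qed

lemma sum_support:
  assumes "finite A" "S \<subseteq> A" "\<And>x. x \<in> A \<Longrightarrow> x \<notin> S \<Longrightarrow> g x = 0"
  shows "sum g A = sum g S"
  using assms by (intro sum.mono_neutral_right) auto

context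
  fixes s k :: nat and a :: complex
  assumes k1: "1 \<le> k" and ks: "k < s" and a1: "a \<noteq> 1" and q0: "a^2 - 3*a + 1 \<noteq> 0"
begin

definition "mf i j = (if i = j then a - of_nat (dg s k i) else if spider_edge s k i j then 1 else (0::complex))"
definition "bf j c = (if j = c then 1 else if c = 0 then
      (if j \<le> k then -(a-1)/(a^2 - 3*a + 1) else if j \<le> s then -1/(a-1) else 1/(a^2 - 3*a + 1))
    else if 1 \<le> c \<and> c \<le> k \<and> j = s + c then -1/(a-1) else 0)"

lemma T_low:
  assumes "c < r" "r < s + k + 1"
  shows "(\<Sum>j<s+k+1. mf r j * bf j c) = 0"
proof -
  let ?n = "s+k+1"
  consider "c = 0" | "1 \<le> c \<and> c \<le> k" | "k < c" by linarith
  then show ?thesis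
  proof cases
    case 1
    consider "1 \<le> r \<and> r \<le> k" | "k < r \<and> r \<le> s" | "s < r" using assms 1 by linarith
    then show ?thesis
    proof cases
      case 1
      have "(\<Sum>j<?n. mf r j * bf j c) = (\<Sum>j\<in>{0, r, s+r}. mf r j * bf j c)"
        by (rule sum_support) (use assms 1 ks \<open>c = 0\<close> in \<open>auto simp: mf_def spider_edge_def\<close>)
      also have "\<dots> = 0"
        using assms 1 \<open>c = 0\<close> a1 q0 ks
        apply (simp add: mf_def bf_def spider_edge_def dg_def)
        apply (simp add: field_simps)
        apply (simp add: algebra_simps power2_eq_square)
        done
      finally show ?thesis .
    next
      case 2
      have "(\<Sum>j<?n. mf r j * bf j c) = (\<Sum>j\<in>{0, r}. mf r j * bf j c)"
        by (rule sum_support) (use assms 2 ks \<open>c = 0\<close> in \<open>auto simp: mf_def spider_edge_def\<close>)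
      also have "\<dots> = 0"
        using assms 2 \<open>c = 0\<close> a1 q0 ks
        by (simp add: mf_def bf_def spider_edge_def dg_def)
      finally show ?thesis .
    next
      case 3
      have "(\<Sum>j<?n. mf r j * bf j c) = (\<Sum>j\<in>{r - s, r}. mf r j * bf j c)"
        by (rule sum_support) (use assms 3 ks \<open>c = 0\<close> in \<open>auto simp: mf_def spider_edge_def\<close>)
      also have "\<dots> = 0"
        using assms 3 \<open>c = 0\<close> a1 q0 ks
        apply (simp add: mf_def bf_def spider_edge_def dg_def)
        apply (auto simp: add_divide_distrib[symmetric])
        done
      finally show ?thesis .
    qed
  next
    case 2
    have "(\<Sum>j<?n. mf r j * bf j c) = (\<Sum>j\<in>{c, s+c}. mf r j * bf j c)"
      by (rule sum_support) (use assms 2 ks in \<open>auto simp: bf_def\<close>)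
    also have "\<dots> = 0"
      using assms 2 a1 q0 ks
      by (simp add: mf_def bf_def spider_edge_def dg_def)
    finally show ?thesis .
  next
    case 3
    have "(\<Sum>j<?n. mf r j * bf j c) = (\<Sum>j\<in>{c}. mf r j * bf j c)"
      by (rule sum_support) (use assms 3 ks in \<open>auto simp: bf_def\<close>)
    also have "\<dots> = 0"
      using assms 3 a1 q0 ks
      by (simp add: mf_def bf_def spider_edge_def dg_def)
    finally show ?thesis .
  qed
qed

lemma T_diag:
  assumes "r < s + k + 1"
  shows "(\<Sum>j<s+k+1. mf r j * bf j r) =
    (if r = 0 then a - of_nat s - of_nat k * (a-1)/(a^2 - 3*a + 1) - of_nat (s - k) / (a - 1)
     else if r \<le> k then a - 2 - 1/(a-1) else a - 1)"
proof -
  let ?n = "s+k+1"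
  consider "r = 0" | "1 \<le> r \<and> r \<le> k" | "k < r" by linarith
  then show ?thesis
  proof cases
    case 1
    have "(\<Sum>j<?n. mf r j * bf j r) = (\<Sum>j\<in>{0..s}. mf r j * bf j r)"
      by (rule sum_support) (use assms 1 ks in \<open>auto simp: mf_def spider_edge_def\<close>)
    also have "\<dots> = mf 0 0 * bf 0 0 + (\<Sum>j\<in>{1..s}. mf r j * bf j r)"
      using 1 by (simp add: sum.atLeast_Suc_atMost)
    also have "(\<Sum>j\<in>{1..s}. mf r j * bf j r) = (\<Sum>j\<in>{1..k}. mf r j * bf j r) + (\<Sum>j\<in>{k+1..s}. mf r j * bf j r)"
    proof -
      have "{1..s} = {1..k} \<union> {k+1..s}" using k1 ks by auto
      then show ?thesis by (simp add: sum.union_disjoint)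
    qed
    also have "(\<Sum>j\<in>{1..k}. mf r j * bf j r) = (\<Sum>j\<in>{1..k}. -(a-1)/(a^2 - 3*a + 1))"
      by (rule sum.cong) (use 1 ks in \<open>auto simp: mf_def bf_def spider_edge_def\<close>)
    also have "(\<Sum>j\<in>{k+1..s}. mf r j * bf j r) = (\<Sum>j\<in>{k+1..s}. -1/(a-1))"
      by (rule sum.cong) (use 1 ks in \<open>auto simp: mf_def bf_def spider_edge_def\<close>)
    finally have X: "(\<Sum>j<?n. mf r j * bf j r) = mf 0 0 * bf 0 0 + ((\<Sum>j\<in>{1..k}. -(a-1)/(a^2 - 3*a + 1)) + (\<Sum>j\<in>{k+1..s}. -1/(a-1)))" 
      using 1 by simp
    show ?thesis unfolding X using 1 ks q0
      apply (simp add: mf_def bf_def dg_def of_nat_diff)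
      apply (simp add: field_simps)
      done
  next
    case 2
    have "(\<Sum>j<?n. mf r j * bf j r) = (\<Sum>j\<in>{r, s+r}. mf r j * bf j r)"
      by (rule sum_support) (use assms 2 ks in \<open>auto simp: bf_def\<close>)
    also have "\<dots> = a - 2 - 1/(a-1)"
      using assms 2 a1 q0 ks
      by (simp add: mf_def bf_def spider_edge_def dg_def)
    finally show ?thesis using 2 by simp
  next
    case 3
    have "(\<Sum>j<?n. mf r j * bf j r) = (\<Sum>j\<in>{r}. mf r j * bf j r)"
      by (rule sum_support) (use assms 3 ks in \<open>auto simp: bf_def\<close>)
    also have "\<dots> = a - 1"
      using assms 3 a1 q0 ks
      by (simp add: mf_def bf_def spider_edge_def dg_def)
    finally show ?thesis using 3 by simp
  qed
qed

lemma det_Ma: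
  "det (mat (s+k+1) (s+k+1) (\<lambda>(i,j). mf i j)) =
     a * (a^2 - 3*a + 1)^(k-1) * (a-1)^(s-k-1) *
     (a^3 - of_nat (s+4) * a^2 + of_nat (3*s+4) * a - of_nat (s+k+1))"
proof -
  let ?n = "s+k+1"
  let ?q = "a^2 - 3*a + 1"
  define M where "M = mat ?n ?n (\<lambda>(i,j). mf i j)"
  define B where "B = mat ?n ?n (\<lambda>(i,j). bf i j)"
  have M: "M \<in> carrier_mat ?n ?n" and B: "B \<in> carrier_mat ?n ?n" unfolding M_def B_def by auto
  have MB: "M * B \<in> carrier_mat ?n ?n" using M B by auto
  have ent: "(M * B) $$ (r,c) = (\<Sum>j<?n. mf r j * bf j c)" if "r < ?n" "c < ?n" for r c
    using that unfolding M_def B_def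
    by (simp add: scalar_prod_def atLeast0LessThan)
  have detB: "det B = 1"
  proof -
    have "det B = prod_list (diag_mat B)"
      by (rule det_lower_triangular[OF _ B]) (auto simp: B_def bf_def)
    also have "\<dots> = 1" unfolding prod_list_diag_prod using B by (simp add: B_def bf_def)
    finally show ?thesis .
  qed
  have "det (M * B) = prod_list (diag_mat (M * B))"
  proof (rule det_upper_triangular[OF _ MB])
    show "upper_triangular (M * B)"
      unfolding upper_triangular_def using MB ent T_low by auto
  qed
  also have "\<dots> = (\<Prod>r = 0..<?n. (\<Sum>j<?n. mf r j * bf j r))"
    unfolding prod_list_diag_prod using MB ent by (intro prod.cong) auto
  also have "\<dots> = (\<Prod>r = 0..<?n. (if r = 0 then a - of_nat s - of_nat k * (a-1)/?q - of_nat (s - k) / (a - 1)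
     else if r \<le> k then a - 2 - 1/(a-1) else a - 1))"
    using T_diag by (intro prod.cong) auto
  also have "\<dots> = (a - of_nat s - of_nat k * (a-1)/?q - of_nat (s - k) / (a - 1)) *
      ((a - 2 - 1/(a-1))^k * (a-1)^s)"
  proof -
    have S: "{0..<?n} = insert 0 ({1..k} \<union> {k+1..s+k})" by auto
    show ?thesis unfolding S
      by (subst prod.insert) (auto simp: prod.union_disjoint)
  qed
  finally have D: "det (M * B) = \<dots>" .
  obtain k' where k': "k = Suc k'" using k1 by (cases k) auto
  obtain m where m: "s - k = Suc m" using ks by (metis Suc_diff_Suc)
  have s: "s = k + Suc m" using m ks by simp
  have am: "a - 1 \<noteq> 0" using a1 by simp
  have e1: "a - 2 - 1/(a-1) = ?q / (a-1)" using am by (simp add: field_simps power2_eq_square)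
  have h2: "(?q/(a-1))^k * (a-1)^s = (?q * (a-1)) * (?q^(k-1) * (a-1)^(s-k-1))"
    unfolding k' s using am by (simp add: power_divide power_add field_simps)
  have h1: "(a - of_nat s - of_nat k * (a-1)/?q - of_nat (s - k) / (a - 1)) * (?q * (a-1))
     = a * (a^3 - of_nat (s+4) * a^2 + of_nat (3*s+4) * a - of_nat (s+k+1))"
    using alg1[OF am q0, of "of_nat s" "of_nat k"] ks by (simp add: of_nat_diff)
  have "det M = det (M * B)" using det_mult[OF M B] detB by simp
  also have "\<dots> = a * ?q^(k-1) * (a-1)^(s-k-1) *
     (a^3 - of_nat (s+4) * a^2 + of_nat (3*s+4) * a - of_nat (s+k+1))"
  proof -
    have "det (M * B) = (a - of_nat s - of_nat k * (a-1)/?q - of_nat (s - k) / (a - 1)) *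
      ((?q/(a-1))^k * (a-1)^s)" using D e1 by simp
    also have "\<dots> = ((a - of_nat s - of_nat k * (a-1)/?q - of_nat (s - k) / (a - 1)) * (?q * (a-1)))
       * (?q^(k-1) * (a-1)^(s-k-1))" unfolding h2 by (simp only: mult.assoc)
    also have "\<dots> = a * (a^3 - of_nat (s+4) * a^2 + of_nat (3*s+4) * a - of_nat (s+k+1))
       * (?q^(k-1) * (a-1)^(s-k-1))" unfolding h1 ..
    finally show ?thesis by (simp only: mult.assoc mult.commute mult.left_commute)
  qed
  finally show ?thesis unfolding M_def .
qed

end

lemma theta_facts:
  "(3 - sqrt 5) / 2 + (3 + sqrt 5) / 2 = (3::real)"
  "((3 - sqrt 5) / 2) * ((3 + sqrt 5) / 2) = (1::real)"
proof -
  show "(3 - sqrt 5) / 2 + (3 + sqrt 5) / 2 = (3::real)" by (simp add: field_simps)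
  have "sqrt 5 * sqrt 5 = (5::real)" by simp
  then show "((3 - sqrt 5) / 2) * ((3 + sqrt 5) / 2) = (1::real)"
    by (simp add: field_simps algebra_simps)
qed

lemma quad_factor:
  fixes a :: complex
  shows "(a - complex_of_real ((3 - sqrt 5) / 2)) * (a - complex_of_real ((3 + sqrt 5) / 2))
         = a^2 - 3*a + 1"
proof -
  let ?t = "complex_of_real ((3 - sqrt 5) / 2)" and ?u = "complex_of_real ((3 + sqrt 5) / 2)"
  have su: "?t + ?u = 3" using arg_cong[OF theta_facts(1), of complex_of_real] by simp
  have pr: "?t * ?u = 1" using arg_cong[OF theta_facts(2), of complex_of_real] by simp
  have "(a - ?t) * (a - ?u) = a^2 - (?t + ?u) * a + ?t * ?u"
    by (simp add: algebra_simps power2_eq_square)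
  then show ?thesis unfolding su pr .
qed

lemma proots_mult5:
  fixes p1 p2 p3 p4 p5 :: "complex poly"
  assumes "p1 \<noteq> 0" "p2 \<noteq> 0" "p3 \<noteq> 0" "p4 \<noteq> 0" "p5 \<noteq> 0"
  shows "proots (p1*p2*p3*p4*p5) = proots p1 + proots p2 + proots p3 + proots p4 + proots p5"
  using assms by (simp add: proots_mult)

theorem proposition3p2:
  fixes s k :: nat
  assumes "1 \<le> k" and "k < s"
  shows "spider_laplacian_spectrum s k =
           {#0#}
         + replicate_mset (k - 1) (complex_of_real ((3 - sqrt 5) / 2))
         + replicate_mset (s - k - 1) 1
         + replicate_mset (k - 1) (complex_of_real ((3 + sqrt 5) / 2))
         + proots [: - of_nat (s + k + 1), of_nat (3 * s + 4), - of_nat (s + 4), 1 :]"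
proof -
  let ?n = "s + k + 1"
  let ?t = "complex_of_real ((3 - sqrt 5) / 2)" and ?u = "complex_of_real ((3 + sqrt 5) / 2)"
  define C :: "complex poly" where "C = [: - of_nat (s + k + 1), of_nat (3 * s + 4), - of_nat (s + 4), 1 :]"
  define Lc where "Lc = map_mat complex_of_real (laplacian_matrix ?n (spider_edge s k))"
  define P where "P = [:0,1:] * [:-?t,1:]^(k-1) * [:-1,1:]^(s-k-1) * [:-?u,1:]^(k-1) * C"
  have Lc: "Lc \<in> carrier_mat ?n ?n"
    unfolding Lc_def laplacian_matrix_def degree_matrix_def adjacency_matrix_def by auto
  have ev: "poly (char_poly Lc) a = poly P a" if a1: "a \<noteq> 1" and q0: "a^2 - 3*a + 1 \<noteq> 0" for a
  proof -
    have "poly (char_poly Lc) a = det (mat ?n ?n (\<lambda>(i,j). mf s k a i j))"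
      unfolding char_poly_def
    proof (rule poly_det_cong[of _ ?n])
      show "char_poly_matrix Lc \<in> carrier_mat ?n ?n" using Lc by simp
      fix i j assume ij: "i < ?n" "j < ?n"
      show "poly (char_poly_matrix Lc $$ (i, j)) a = mat ?n ?n (\<lambda>(i, j). mf s k a i j) $$ (i, j)"
        using ij Lc lap_entry[OF assms ij]
        by (auto simp: char_poly_matrix_def Lc_def mf_def[OF assms a1 q0])
    qed auto
    also have "\<dots> = a * (a^2 - 3*a + 1)^(k-1) * (a-1)^(s-k-1) *
     (a^3 - of_nat (s+4) * a^2 + of_nat (3*s+4) * a - of_nat (s+k+1))"
      by (rule det_Ma[OF assms a1 q0])
    also have "\<dots> = poly P a"
    proof -
      have "poly P a = a * ((a - ?t) * (a - ?u))^(k-1) * (a-1)^(s-k-1) * poly C a"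
        unfolding P_def by (simp add: power_mult_distrib mult_ac)
      also have "poly C a = a^3 - of_nat (s+4) * a^2 + of_nat (3*s+4) * a - of_nat (s+k+1)"
        unfolding C_def by (simp add: algebra_simps power2_eq_square power3_eq_cube)
      finally show ?thesis unfolding quad_factor by simp
    qed
    finally show ?thesis .
  qed
  have eqP: "char_poly Lc = P"
  proof (rule ccontr)
    assume ne: "char_poly Lc \<noteq> P"
    let ?Q = "[:1, -3, 1:] :: complex poly"
    have Q0: "?Q \<noteq> 0" by simp
    have f1: "finite {x. poly (char_poly Lc - P) x = 0}"
      using ne by (intro poly_roots_finite) simp
    have f2: "finite ({1} \<union> {x. poly ?Q x = 0})"
      using poly_roots_finite[OF Q0] by simp
    have "UNIV \<subseteq> {x. poly (char_poly Lc - P) x = 0} \<union> ({1} \<union> {x. poly ?Q x = 0})"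
    proof
      fix x :: complex
      show "x \<in> {x. poly (char_poly Lc - P) x = 0} \<union> ({1} \<union> {x. poly ?Q x = 0})"
      proof (cases "x = 1 \<or> x^2 - 3*x + 1 = 0")
        case True
        then show ?thesis by (auto simp: algebra_simps power2_eq_square)
      next
        case False
        then show ?thesis using ev[of x] by simp
      qed
    qed
    then have "finite (UNIV :: complex set)" using f1 f2 finite_subset by blast
    then show False using infinite_UNIV_char_0 by blast
  qed
  have C0: "C \<noteq> 0" unfolding C_def by simp
  have "spider_laplacian_spectrum s k = proots P"
    unfolding spider_laplacian_spectrum_def laplacian_spectrum_def eqP[unfolded Lc_def, symmetric] ..
  also have "\<dots> = {#0#} + replicate_mset (k - 1) ?t + replicate_mset (s - k - 1) 1
         + replicate_mset (k - 1) ?u + proots C"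
    unfolding P_def
    by (subst proots_mult5) (use C0 in \<open>simp_all add: proots_power\<close>)
  finally show ?thesis unfolding C_def .
qed

end
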